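(* Let $k$ be a positive rational with $k<3$ and $\varepsilon$ a positive real with $\varepsilon\ge\frac{1}{k+\varepsilon}$. If $G$ is a fractionally $k$-colorable graph and $W\subseteq V(G)$ is a set of vertices at pairwise distance at least six, then every fractional $(k+\varepsilon)$-precoloring of $W$ extends to a fractional $(k+\varepsilon)$-coloring of $G$.
   Context: A fractional $m$-coloring of a graph (real $m>0$) assigns to each vertex a measurable subset of $[0,m)$ of Lebesgue measure one so that adjacent vertices receive disjoint sets; a graph is fractionally $k$-colorable if it has a fractional $k$-coloring. A fractional $m$-precoloring of a vertex set $W$ assigns measurable subsets of $[0,m)$ of measure one to the vertices of $W$; it extends if some fractional $m$-coloring of the whole graph agrees with it on $W$. Graphs are finite. *)

theory Defs
  imports "HOL-Analysis.Analysis"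
begin

definition graph :: "'a set \<Rightarrow> ('a \<Rightarrow> 'a \<Rightarrow> bool) \<Rightarrow> bool" where
  "graph V E \<longleftrightarrow> finite V \<and> (\<forall>u v. E u v \<longrightarrow> u \<in> V \<and> v \<in> V)
     \<and> (\<forall>u v. E u v \<longrightarrow> E v u) \<and> (\<forall>u. \<not> E u u)"

fun walk :: "('a \<Rightarrow> 'a \<Rightarrow> bool) \<Rightarrow> nat \<Rightarrow> 'a \<Rightarrow> 'a \<Rightarrow> bool" where
  "walk E 0 u v = (u = v)"
| "walk E (Suc n) u v = (\<exists>w. E u w \<and> walk E n w v)"

definition dist_ge :: "('a \<Rightarrow> 'a \<Rightarrow> bool) \<Rightarrow> nat \<Rightarrow> 'a \<Rightarrow> 'a \<Rightarrow> bool" where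
  "dist_ge E d u v \<longleftrightarrow> (\<forall>n<d. \<not> walk E n u v)"

definition frac_color_set :: "real \<Rightarrow> real set \<Rightarrow> bool" where
  "frac_color_set m S \<longleftrightarrow> S \<in> sets lebesgue \<and> S \<subseteq> {0..<m} \<and> emeasure lebesgue S = 1"

definition fractional_coloring ::
  "'a set \<Rightarrow> ('a \<Rightarrow> 'a \<Rightarrow> bool) \<Rightarrow> real \<Rightarrow> ('a \<Rightarrow> real set) \<Rightarrow> bool" where
  "fractional_coloring V E m f \<longleftrightarrow>
     (\<forall>v\<in>V. frac_color_set m (f v)) \<and> (\<forall>u v. E u v \<longrightarrow> f u \<inter> f v = {})"

definition fractionally_colorable :: "'a set \<Rightarrow> ('a \<Rightarrow> 'a \<Rightarrow> bool) \<Rightarrow> real \<Rightarrow> bool" where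
  "fractionally_colorable V E m \<longleftrightarrow> (\<exists>f. fractional_coloring V E m f)"

definition fractional_precoloring :: "'a set \<Rightarrow> real \<Rightarrow> ('a \<Rightarrow> real set) \<Rightarrow> bool" where
  "fractional_precoloring W m p \<longleftrightarrow> (\<forall>w\<in>W. frac_color_set m (p w))"

definition precoloring_extends ::
  "'a set \<Rightarrow> ('a \<Rightarrow> 'a \<Rightarrow> bool) \<Rightarrow> real \<Rightarrow> 'a set \<Rightarrow> ('a \<Rightarrow> real set) \<Rightarrow> bool" where
  "precoloring_extends V E m W p \<longleftrightarrow>
     (\<exists>f. fractional_coloring V E m f \<and> (\<forall>w\<in>W. f w = p w))"

end

theory Submission imports Defs begin

lemma fin_emeasure:
  assumes "A \<in> sets lebesgue" "A \<subseteq> {a..b::real}"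
  shows "emeasure lebesgue A \<noteq> \<infinity>"
proof -
  have "emeasure lebesgue A \<le> emeasure lebesgue {a..b}"
    using assms by (intro emeasure_mono) auto
  also have "\<dots> < \<infinity>" by (cases "a \<le> b") auto
  finally show ?thesis by simp
qed

lemma bnd_lmeasurable:
  assumes "A \<in> sets lebesgue" "A \<subseteq> {a..b::real}"
  shows "A \<in> lmeasurable"
  using assms bounded_subset[OF bounded_closed_interval[of a b]] by (intro bounded_set_imp_lmeasurable) auto

lemma msum:
  assumes "finite S" "\<And>i. i \<in> S \<Longrightarrow> A i \<in> sets lebesgue" "\<And>i. i \<in> S \<Longrightarrow> A i \<subseteq> {a..b::real}"
    "disjoint_family_on A S"
  shows "measure lebesgue (\<Union>i\<in>S. A i) = (\<Sum>i\<in>S. measure lebesgue (A i))"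
  using assms fin_emeasure[OF assms(2,3)] by (intro measure_finite_Union) auto

lemma mun2:
  assumes "A \<in> sets lebesgue" "A \<subseteq> {a..b::real}" "B \<in> sets lebesgue" "B \<subseteq> {a..b}" "A \<inter> B = {}"
  shows "measure lebesgue (A \<union> B) = measure lebesgue A + measure lebesgue B"
  using assms fin_emeasure[OF assms(1,2)] fin_emeasure[OF assms(3,4)] by (intro measure_Union) auto

lemma mdiff:
  assumes "A \<in> sets lebesgue" "A \<subseteq> {a..b::real}" "B \<in> sets lebesgue" "B \<subseteq> A"
  shows "measure lebesgue (A - B) = measure lebesgue A - measure lebesgue B"
  using assms fin_emeasure[OF assms(1,2)] by (intro measure_Diff) auto

lemma mmono:
  assumes "A \<subseteq> B" "A \<in> sets lebesgue" "B \<in> sets lebesgue" "B \<subseteq> {a..b::real}"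
  shows "measure lebesgue A \<le> measure lebesgue B"
  using assms by (intro measure_mono_fmeasurable) (auto intro: bnd_lmeasurable)

lemma subset_measure:
  assumes A: "A \<in> sets lebesgue" "A \<subseteq> {a..b::real}" and c: "0 \<le> c" "c \<le> measure lebesgue A"
  shows "\<exists>B \<subseteq> A. B \<in> sets lebesgue \<and> measure lebesgue B = c"
proof (cases "c = 0")
  case True
  then show ?thesis by (intro exI[of _ "{}"]) auto
next
  case False
  define h where "h x = measure lebesgue (A \<inter> {..x})" for x
  have meas: "A \<inter> {..x} \<in> sets lebesgue" for x using A by auto
  have lip: "\<bar>h y - h x\<bar> \<le> \<bar>y - x\<bar>" for x y
  proof -
    have *: "h v - h u \<le> v - u \<and> h u \<le> h v" if "u \<le> v" for u v
    proof -
      have eq: "A \<inter> {..v} = (A \<inter> {..u}) \<union> (A \<inter> {u<..v})" using that by auto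
      have "h v = h u + measure lebesgue (A \<inter> {u<..v})"
        unfolding h_def eq using A by (intro mun2[of _ a b]) auto
      moreover have "measure lebesgue (A \<inter> {u<..v}) \<le> measure lebesgue {u<..v}"
        using A by (intro mmono[of _ _ u v]) auto
      moreover have "measure lebesgue (A \<inter> {u<..v}) \<ge> 0" by simp
      ultimately show ?thesis using that by simp
    qed
    show ?thesis using *[of x y] *[of y x] by (cases "x \<le> y") auto
  qed
  have cont: "continuous_on {a-1..b} h"
    by (rule lipschitz_on_continuous_on[of 1]) (rule lipschitz_onI, use lip in \<open>auto simp: dist_real_def\<close>)
  have h0: "h (a-1) = 0" unfolding h_def using A by (subgoal_tac "A \<inter> {..a-1} = {}") auto
  have h1: "h b = measure lebesgue A" unfolding h_def using A by (subgoal_tac "A \<inter> {..b} = A") auto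
  have "a - 1 \<le> b"
  proof (rule ccontr)
    assume "\<not> a - 1 \<le> b"
    then have "A = {}" using A by auto
    then show False using c False by simp
  qed
  then obtain x where "h x = c" using IVT'[of h "a-1" c b] cont h0 h1 c by auto
  then show ?thesis using meas unfolding h_def by blast
qed

lemma split_measure:
  assumes "finite J"
  shows "A \<in> sets lebesgue \<Longrightarrow> A \<subseteq> {a..b::real} \<Longrightarrow> (\<forall>j\<in>J. 0 \<le> c j) \<Longrightarrow> sum c J \<le> measure lebesgue A
    \<Longrightarrow> \<exists>D. (\<forall>j\<in>J. D j \<subseteq> A \<and> D j \<in> sets lebesgue \<and> measure lebesgue (D j) = c j) \<and> disjoint_family_on D J"
  using assms
proof (induction J arbitrary: A rule: finite_induct)
  case empty
  then show ?case by (auto simp: disjoint_family_on_def)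
next
  case (insert j J)
  have cj: "0 \<le> c j" "c j \<le> measure lebesgue A"
    using insert.prems insert.hyps sum_nonneg[of J c] by auto
  obtain B where B: "B \<subseteq> A" "B \<in> sets lebesgue" "measure lebesgue B = c j"
    using subset_measure[OF insert.prems(1,2) cj] by blast
  have mAB: "measure lebesgue (A - B) = measure lebesgue A - c j"
    using mdiff[OF insert.prems(1,2) B(2,1)] B(3) by simp
  have "sum c J \<le> measure lebesgue (A - B)"
    using insert.prems insert.hyps mAB by auto
  then obtain D where D: "\<forall>i\<in>J. D i \<subseteq> A - B \<and> D i \<in> sets lebesgue \<and> measure lebesgue (D i) = c i"
    "disjoint_family_on D J"
  proof -
    have "A - B \<in> sets lebesgue" "A - B \<subseteq> {a..b}" using insert.prems B by auto
    then show ?thesis using insert.IH[of "A - B"] insert.prems \<open>sum c J \<le> _\<close> that by blast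
  qed
  show ?case
  proof (intro exI[of _ "D(j := B)"] conjI)
    show "\<forall>i\<in>insert j J. (D(j := B)) i \<subseteq> A \<and> (D(j := B)) i \<in> sets lebesgue \<and> measure lebesgue ((D(j := B)) i) = c i"
    proof
      fix i assume "i \<in> insert j J"
      then show "(D(j := B)) i \<subseteq> A \<and> (D(j := B)) i \<in> sets lebesgue \<and> measure lebesgue ((D(j := B)) i) = c i"
        using D(1) B by (cases "i = j") auto
    qed
    show "disjoint_family_on (D(j := B)) (insert j J)"
      unfolding disjoint_family_on_def
    proof (intro ballI impI)
      fix x y assume xy: "x \<in> insert j J" "y \<in> insert j J" "x \<noteq> y"
      show "(D(j := B)) x \<inter> (D(j := B)) y = {}"
      proof (cases "x = j")
        case True
        then have "y \<in> J" "y \<noteq> j" using xy by auto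
        then show ?thesis using True D(1) by auto
      next
        case False
        note F = False
        show ?thesis
        proof (cases "y = j")
          case True
          then have "x \<in> J" using xy F by auto
          then show ?thesis using True F D(1) by auto
        next
          case False
          then have "x \<in> J" "y \<in> J" using xy F by auto
          then show ?thesis using F False D(2) xy(3) unfolding disjoint_family_on_def by auto
        qed
      qed
    qed
  qed
qed

definition atom :: "real set \<Rightarrow> 'b set \<Rightarrow> ('b \<Rightarrow> real set) \<Rightarrow> 'b set \<Rightarrow> real set" where
  "atom \<Omega> X h S = {t \<in> \<Omega>. \<forall>x\<in>X. (t \<in> h x \<longleftrightarrow> x \<in> S)}"

lemma atom_alt: "atom \<Omega> X h S = \<Omega> - (\<Union>x\<in>X. (if x \<in> S then \<Omega> - h x else h x))"
  unfolding atom_def by auto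

lemma atom_sets:
  assumes "finite X" "\<Omega> \<in> sets lebesgue" "\<forall>x\<in>X. h x \<in> sets lebesgue"
  shows "atom \<Omega> X h S \<in> sets lebesgue"
  unfolding atom_alt using assms by (intro sets.Diff sets.finite_UN) auto

lemma atom_sub: "atom \<Omega> X h S \<subseteq> \<Omega>" unfolding atom_def by auto

lemma atom_disj: "disjoint_family_on (atom \<Omega> X h) (Pow X)"
  unfolding disjoint_family_on_def atom_def by auto

lemma atom_cover: "\<Omega> = (\<Union>S\<in>Pow X. atom \<Omega> X h S)"
proof
  show "\<Omega> \<subseteq> (\<Union>S\<in>Pow X. atom \<Omega> X h S)"
  proof
    fix t assume "t \<in> \<Omega>"
    then have "t \<in> atom \<Omega> X h {x\<in>X. t \<in> h x}" unfolding atom_def by auto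
    then show "t \<in> (\<Union>S\<in>Pow X. atom \<Omega> X h S)" by auto
  qed
qed (auto simp: atom_def)

lemma atom_elem:
  assumes "x \<in> X" "\<forall>x\<in>X. h x \<subseteq> \<Omega>"
  shows "h x = (\<Union>S\<in>{S\<in>Pow X. x \<in> S}. atom \<Omega> X h S)"
proof
  show "h x \<subseteq> (\<Union>S\<in>{S\<in>Pow X. x \<in> S}. atom \<Omega> X h S)"
  proof
    fix t assume t: "t \<in> h x"
    have 1: "t \<in> atom \<Omega> X h {y\<in>X. t \<in> h y}" using assms t unfolding atom_def by auto
    have 2: "{y\<in>X. t \<in> h y} \<in> {S\<in>Pow X. x \<in> S}" using t assms(1) by auto
    show "t \<in> (\<Union>S\<in>{S\<in>Pow X. x \<in> S}. atom \<Omega> X h S)" by (rule UN_I[where B="atom \<Omega> X h", OF 2 1])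
  qed
qed (use assms in \<open>auto simp: atom_def\<close>)

lemma atom_measures:
  assumes "finite X" "\<Omega> \<in> sets lebesgue" "\<Omega> \<subseteq> {a..b::real}" "\<forall>x\<in>X. h x \<in> sets lebesgue \<and> h x \<subseteq> \<Omega>"
  shows "measure lebesgue \<Omega> = (\<Sum>S\<in>Pow X. measure lebesgue (atom \<Omega> X h S))"
    and "x \<in> X \<Longrightarrow> measure lebesgue (h x) = (\<Sum>S\<in>{S\<in>Pow X. x \<in> S}. measure lebesgue (atom \<Omega> X h S))"
proof -
  have ms: "atom \<Omega> X h S \<in> sets lebesgue" for S using assms by (intro atom_sets) auto
  have sb: "atom \<Omega> X h S \<subseteq> {a..b}" for S using atom_sub assms(3) by blast
  show "measure lebesgue \<Omega> = (\<Sum>S\<in>Pow X. measure lebesgue (atom \<Omega> X h S))"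
    apply (subst atom_cover[of \<Omega> X h])
    using assms(1) ms sb atom_disj[of \<Omega> X h] by (intro msum[where a=a and b=b]) auto
  assume x: "x \<in> X"
  show "measure lebesgue (h x) = (\<Sum>S\<in>{S\<in>Pow X. x \<in> S}. measure lebesgue (atom \<Omega> X h S))"
    apply (subst atom_elem[OF x, of h \<Omega>])
    using assms apply blast
    using assms(1) ms sb atom_disj[of \<Omega> X h] by (intro msum[where a=a and b=b]) (auto simp: disjoint_family_on_def)
qed

lemma sum_split: "finite X \<Longrightarrow> sum g X = sum g {x\<in>X. P x} + sum g {x\<in>X. \<not> P x}"
proof -
  assume "finite X"
  moreover have "X = {x\<in>X. P x} \<union> {x\<in>X. \<not> P x}" by auto
  ultimately show ?thesis by (metis (no_types, lifting) sum.union_disjoint finite_Un disjoint_iff mem_Collect_eq)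
qed

lemma split_in_out:
  assumes i: "\<And>S. S \<in> Pow W \<Longrightarrow> w \<in> S \<Longrightarrow> X S \<subseteq> P"
    and o: "\<And>S. S \<in> Pow W \<Longrightarrow> w \<notin> S \<Longrightarrow> X S \<inter> P = {}"
  shows "(\<Union>S\<in>Pow W. X S) - P = (\<Union>S\<in>{S\<in>Pow W. w \<notin> S}. X S)"
    and "(\<Union>S\<in>Pow W. X S) \<inter> P = (\<Union>S\<in>{S\<in>Pow W. w \<in> S}. X S)"
proof -
  show "(\<Union>S\<in>Pow W. X S) - P = (\<Union>S\<in>{S\<in>Pow W. w \<notin> S}. X S)"
  proof (rule equalityI; rule subsetI)
    fix x assume "x \<in> (\<Union>S\<in>Pow W. X S) - P"
    then obtain S where S: "S \<in> Pow W" "x \<in> X S" "x \<notin> P" by blast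
    then have "w \<notin> S" using i by blast
    then show "x \<in> (\<Union>S\<in>{S\<in>Pow W. w \<notin> S}. X S)" using S by blast
  next
    fix x assume "x \<in> (\<Union>S\<in>{S\<in>Pow W. w \<notin> S}. X S)"
    then obtain S where S: "S \<in> Pow W" "w \<notin> S" "x \<in> X S" by blast
    then show "x \<in> (\<Union>S\<in>Pow W. X S) - P" using o[OF S(1,2)] by blast
  qed
  show "(\<Union>S\<in>Pow W. X S) \<inter> P = (\<Union>S\<in>{S\<in>Pow W. w \<in> S}. X S)"
  proof (rule equalityI; rule subsetI)
    fix x assume "x \<in> (\<Union>S\<in>Pow W. X S) \<inter> P"
    then obtain S where S: "S \<in> Pow W" "x \<in> X S" "x \<in> P" by blast
    then have "w \<in> S" using o by blast
    then show "x \<in> (\<Union>S\<in>{S\<in>Pow W. w \<in> S}. X S)" using S by blast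
  next
    fix x assume "x \<in> (\<Union>S\<in>{S\<in>Pow W. w \<in> S}. X S)"
    then obtain S where S: "S \<in> Pow W" "w \<in> S" "x \<in> X S" by blast
    then show "x \<in> (\<Union>S\<in>Pow W. X S) \<inter> P" using i[OF S(1,2)] by blast
  qed
qed

lemma walk_append: "walk E a x y \<Longrightarrow> walk E b y z \<Longrightarrow> walk E (a + b) x z"
  by (induction a arbitrary: x) auto

lemma walk_snoc: "walk E n x y \<Longrightarrow> E y z \<Longrightarrow> walk E (Suc n) x z"
  using walk_append[of E n x y 1 z] by auto

lemma walk_sym: assumes "\<forall>u v. E u v \<longrightarrow> E v u" shows "walk E n x y \<Longrightarrow> walk E n y x"
proof (induction n arbitrary: x)
  case (Suc n)
  then obtain w where "E x w" "walk E n w y" by auto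
  then show ?case using Suc.IH walk_snoc[of E n y w x] assms by auto
qed simp

lemma measure_eq1: "emeasure lebesgue S = 1 \<Longrightarrow> measure lebesgue S = 1"
  by (simp add: measure_def)

locale ext_setup =
  fixes V :: "'a set" and E :: "'a \<Rightarrow> 'a \<Rightarrow> bool" and W :: "'a set"
    and k \<epsilon> :: real and p :: "'a \<Rightarrow> real set" and f :: "'a \<Rightarrow> real set"
  assumes graph: "graph V E" and k3: "k < 3" and eps: "0 < \<epsilon>" and epsm: "1 \<le> \<epsilon> * (k + \<epsilon>)"
    and fcol: "fractional_coloring V E k f" and WV: "W \<subseteq> V"
    and dist: "\<forall>u\<in>W. \<forall>v\<in>W. u \<noteq> v \<longrightarrow> dist_ge E 6 u v"
    and pre: "fractional_precoloring W (k + \<epsilon>) p"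
    and kpos: "0 < k"
begin

abbreviation "m \<equiv> k + \<epsilon>"

lemma mpos: "0 < m" using kpos eps by simp

lemma finV: "finite V" using graph unfolding graph_def by auto
lemma finW: "finite W" using finV WV finite_subset by auto
lemma Esym: "E u v \<Longrightarrow> E v u" using graph unfolding graph_def by auto
lemma EV: "E u v \<Longrightarrow> u \<in> V \<and> v \<in> V" using graph unfolding graph_def by auto
lemma Eirr: "\<not> E u u" using graph unfolding graph_def by auto

lemma f_props: "v \<in> V \<Longrightarrow> f v \<in> sets lebesgue \<and> f v \<subseteq> {0..<k} \<and> measure lebesgue (f v) = 1"
  using fcol measure_eq1 unfolding fractional_coloring_def frac_color_set_def by auto
lemma f_disj: "E u v \<Longrightarrow> f u \<inter> f v = {}"
  using fcol unfolding fractional_coloring_def by auto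
lemma p_props: "w \<in> W \<Longrightarrow> p w \<in> sets lebesgue \<and> p w \<subseteq> {0..<m} \<and> measure lebesgue (p w) = 1"
  using pre measure_eq1 unfolding fractional_precoloring_def frac_color_set_def by auto

lemma close_eq: "w \<in> W \<Longrightarrow> w' \<in> W \<Longrightarrow> walk E n w w' \<Longrightarrow> n < 6 \<Longrightarrow> w = w'"
  using dist unfolding dist_ge_def by blast

lemma k_ge1: assumes "v \<in> V" shows "1 \<le> k"
proof -
  have "measure lebesgue (f v) \<le> measure lebesgue {0..<k}"
    using f_props[OF assms] by (intro mmono[of _ _ 0 k]) auto
  then show ?thesis using f_props[OF assms] kpos by simp
qed

lemma no_triangle: assumes "E a b" "E b c" "E a c" shows False
proof -
  have V: "a \<in> V" "b \<in> V" "c \<in> V" using assms EV by auto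
  have d: "f a \<inter> f b = {}" "f b \<inter> f c = {}" "f a \<inter> f c = {}" using assms f_disj by auto
  have "measure lebesgue (f a \<union> f b \<union> f c) = measure lebesgue (f a \<union> f b) + measure lebesgue (f c)"
    using f_props[OF V(1)] f_props[OF V(2)] f_props[OF V(3)] d by (intro mun2[of _ 0 k]) auto
  also have "measure lebesgue (f a \<union> f b) = 2"
  proof -
    have "f a \<subseteq> {0..k}" "f b \<subseteq> {0..k}" using f_props[OF V(1)] f_props[OF V(2)] by auto
    then show ?thesis using f_props[OF V(1)] f_props[OF V(2)] d mun2[of "f a" 0 k "f b"] by auto
  qed
  finally have "measure lebesgue (f a \<union> f b \<union> f c) = 3" using f_props[OF V(3)] by simp
  moreover have "measure lebesgue (f a \<union> f b \<union> f c) \<le> measure lebesgue {0..<k}"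
    using f_props[OF V(1)] f_props[OF V(2)] f_props[OF V(3)] by (intro mmono[of _ _ 0 k]) auto
  ultimately show False using k3 kpos by simp
qed

definition "Ind = {T \<in> Pow V. \<forall>x\<in>T. \<forall>y\<in>T. \<not> E x y}"
definition "B T = atom {0..<k} V f T"
definition "\<mu> T = measure lebesgue (B T)"
definition "A S = atom {0..<m} W p S"

lemma finInd: "finite Ind" unfolding Ind_def using finV by auto

lemma B_empty: "T \<in> Pow V \<Longrightarrow> T \<notin> Ind \<Longrightarrow> B T = {}"
proof -
  assume T: "T \<in> Pow V" "T \<notin> Ind"
  then obtain x y where xy: "x \<in> T" "y \<in> T" "E x y" unfolding Ind_def by auto
  have "x \<in> V" "y \<in> V" using xy T(1) by auto
  then have "t \<notin> B T" for t unfolding B_def atom_def using xy f_disj[OF xy(3)] by blast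
  then show "B T = {}" by blast
qed

lemma mu_nonneg: "0 \<le> \<mu> T" unfolding \<mu>_def by simp

lemma sumB: "(\<Sum>T\<in>Ind. \<mu> T) = k" and sumBv: "v \<in> V \<Longrightarrow> (\<Sum>T\<in>{T\<in>Ind. v \<in> T}. \<mu> T) = 1"
proof -
  have h: "\<forall>x\<in>V. f x \<in> sets lebesgue \<and> f x \<subseteq> {0..<k}" using f_props by auto
  have s1: "{0..<k} \<in> sets lebesgue" "{0..<k} \<subseteq> {0..k}" by auto
  note am = atom_measures[OF finV s1 h]
  have z: "\<mu> T = 0" if "T \<in> Pow V" "T \<notin> Ind" for T using B_empty[OF that] unfolding \<mu>_def by simp
  have mm: "measure lebesgue {0..<k} = k" using kpos by simp
  have "k = (\<Sum>T\<in>Pow V. \<mu> T)" using am(1) mm unfolding \<mu>_def B_def by linarith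
  also have "\<dots> = (\<Sum>T\<in>Ind. \<mu> T)" using z finV by (intro sum.mono_neutral_right) (auto simp: Ind_def)
  finally show "(\<Sum>T\<in>Ind. \<mu> T) = k" by simp
  assume v: "v \<in> V"
  have "1 = (\<Sum>T\<in>{T\<in>Pow V. v \<in> T}. \<mu> T)" using am(2)[OF v] f_props[OF v] unfolding \<mu>_def B_def by linarith
  also have "\<dots> = (\<Sum>T\<in>{T\<in>Ind. v \<in> T}. \<mu> T)" using z finV by (intro sum.mono_neutral_right) (auto simp: Ind_def)
  finally show "(\<Sum>T\<in>{T\<in>Ind. v \<in> T}. \<mu> T) = 1" by simp
qed

lemma A_sets: "A S \<in> sets lebesgue"
proof -
  have "\<forall>x\<in>W. p x \<in> sets lebesgue" using p_props by blast
  then show ?thesis unfolding A_def using finW by (intro atom_sets) simp_all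
qed
lemma A_sub: "A S \<subseteq> {0..m}" unfolding A_def using atom_sub[of "{0..<m}" W p S] by auto
lemma A_sub': "A S \<subseteq> {0..<m}" unfolding A_def using atom_sub[of "{0..<m}" W p S] by auto
lemma A_disj: "S \<in> Pow W \<Longrightarrow> S' \<in> Pow W \<Longrightarrow> S \<noteq> S' \<Longrightarrow> A S \<inter> A S' = {}"
  using atom_disj[of "{0..<m}" W p] unfolding A_def disjoint_family_on_def by blast
lemma A_in: "w \<in> W \<Longrightarrow> w \<in> S \<Longrightarrow> A S \<subseteq> p w" unfolding A_def atom_def by blast
lemma A_out: "w \<in> W \<Longrightarrow> w \<notin> S \<Longrightarrow> A S \<inter> p w = {}" unfolding A_def atom_def by blast

lemma sumA: "(\<Sum>S\<in>Pow W. measure lebesgue (A S)) = m"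
  and sumAw: "w \<in> W \<Longrightarrow> (\<Sum>S\<in>{S\<in>Pow W. w \<in> S}. measure lebesgue (A S)) = 1"
  and sumAnw: "w \<in> W \<Longrightarrow> (\<Sum>S\<in>{S\<in>Pow W. w \<notin> S}. measure lebesgue (A S)) = m - 1"
proof -
  have h: "\<forall>x\<in>W. p x \<in> sets lebesgue \<and> p x \<subseteq> {0..<m}" using p_props by auto
  have s1: "{0..<m} \<in> sets lebesgue" "{0..<m} \<subseteq> {0..m}" by auto
  note am = atom_measures[OF finW s1 h]
  have mm: "measure lebesgue {0..<m} = m" using mpos by simp
  show 1: "(\<Sum>S\<in>Pow W. measure lebesgue (A S)) = m" using am(1) mm unfolding A_def by linarith
  assume w: "w \<in> W"
  show 2: "(\<Sum>S\<in>{S\<in>Pow W. w \<in> S}. measure lebesgue (A S)) = 1" using am(2)[OF w] p_props[OF w] unfolding A_def by linarith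
  have "(\<Sum>S\<in>Pow W. measure lebesgue (A S)) = (\<Sum>S\<in>{S\<in>Pow W. w \<in> S}. measure lebesgue (A S)) + (\<Sum>S\<in>{S\<in>Pow W. w \<notin> S}. measure lebesgue (A S))"
    using finW by (intro sum_split) simp
  then show "(\<Sum>S\<in>{S\<in>Pow W. w \<notin> S}. measure lebesgue (A S)) = m - 1" using 1 2 by simp
qed

definition "J = insert None (Some ` Ind)"
definition "cw S j = (case j of None \<Rightarrow> \<epsilon> * measure lebesgue (A S) / m | Some T \<Rightarrow> measure lebesgue (A S) * \<mu> T / m)"

definition "DDprop S D \<longleftrightarrow> (\<forall>j\<in>J. D j \<subseteq> A S \<and> D j \<in> sets lebesgue \<and> measure lebesgue (D j) = cw S j) \<and> disjoint_family_on D J"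
definition "DD S = (SOME D. DDprop S D)"

lemma finJ: "finite J" unfolding J_def using finInd by simp

lemma sum_cw: "sum (cw S) J = measure lebesgue (A S)"
proof -
  have "sum (cw S) J = cw S None + sum (cw S) (Some ` Ind)" unfolding J_def using finInd by (subst sum.insert) auto
  also have "sum (cw S) (Some ` Ind) = (\<Sum>T\<in>Ind. measure lebesgue (A S) * \<mu> T / m)"
    by (subst sum.reindex) (auto simp: cw_def)
  also have "\<dots> = measure lebesgue (A S) * (\<Sum>T\<in>Ind. \<mu> T) / m"
    by (simp add: sum_divide_distrib[symmetric] sum_distrib_left)
  finally have "sum (cw S) J = \<epsilon> * measure lebesgue (A S) / m + measure lebesgue (A S) * k / m"
    using sumB by (simp add: cw_def)
  also have "\<dots> = measure lebesgue (A S) * m / m" by (simp add: add_divide_distrib[symmetric] algebra_simps)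
  finally show ?thesis using mpos by simp
qed

lemma DD_ex: "DDprop S (DD S)"
proof -
  have "\<exists>D. DDprop S D"
    unfolding DDprop_def
    using split_measure[OF finJ A_sets A_sub, of "cw S"] sum_cw mpos eps
    by (auto simp: cw_def mu_nonneg split: option.splits)
  then show ?thesis unfolding DD_def by (rule someI_ex)
qed

lemma DD_sub: "j \<in> J \<Longrightarrow> DD S j \<subseteq> A S" using DD_ex unfolding DDprop_def by blast
lemma DD_sets: "j \<in> J \<Longrightarrow> DD S j \<in> sets lebesgue" using DD_ex unfolding DDprop_def by blast
lemma DD_meas: "j \<in> J \<Longrightarrow> measure lebesgue (DD S j) = cw S j" using DD_ex unfolding DDprop_def by blast
lemma DD_bnd: "j \<in> J \<Longrightarrow> DD S j \<subseteq> {0..m}" using DD_sub A_sub by blast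

lemma DD_disj:
  assumes "S \<in> Pow W" "S' \<in> Pow W" "j \<in> J" "j' \<in> J" "(S, j) \<noteq> (S', j')"
  shows "DD S j \<inter> DD S' j' = {}"
proof (cases "S = S'")
  case True
  then have "j \<noteq> j'" using assms by auto
  then show ?thesis using DD_ex[of S] True assms unfolding DDprop_def disjoint_family_on_def by blast
next
  case False
  then show ?thesis using A_disj[OF assms(1,2)] DD_sub[OF assms(3), of S] DD_sub[OF assms(4), of S'] by blast
qed

lemma DD_union_measure:
  assumes "\<Phi> \<subseteq> Pow W" "j \<in> J"
  shows "measure lebesgue (\<Union>S\<in>\<Phi>. DD S j) = (\<Sum>S\<in>\<Phi>. cw S j)"
proof -
  have "finite \<Phi>" using assms finW finite_subset by (metis finite_Pow_iff)
  moreover have "disjoint_family_on (\<lambda>S. DD S j) \<Phi>"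
    unfolding disjoint_family_on_def using DD_disj assms by blast
  ultimately show ?thesis using DD_sets DD_bnd DD_meas assms by (subst msum[where a=0 and b=m]) auto
qed

definition "Base T = (\<Union>S\<in>Pow W. DD S (Some T))"
definition "Free = (\<Union>S\<in>Pow W. DD S None)"

lemma SomeJ: "T \<in> Ind \<Longrightarrow> Some T \<in> J" unfolding J_def by auto
lemma NoneJ: "None \<in> J" unfolding J_def by auto

lemma Base_sets: "T \<in> Ind \<Longrightarrow> Base T \<in> sets lebesgue"
  unfolding Base_def using finW DD_sets[OF SomeJ] by (intro sets.finite_UN) auto
lemma Free_sets: "Free \<in> sets lebesgue"
  unfolding Free_def using finW DD_sets[OF NoneJ] by (intro sets.finite_UN) auto
lemma Base_bnd: "T \<in> Ind \<Longrightarrow> Base T \<subseteq> {0..m}"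
  unfolding Base_def using DD_bnd[OF SomeJ] by blast
lemma Free_bnd: "Free \<subseteq> {0..m}"
  unfolding Free_def using DD_bnd[OF NoneJ] by blast

lemma Base_disj: "T \<in> Ind \<Longrightarrow> T' \<in> Ind \<Longrightarrow> T \<noteq> T' \<Longrightarrow> Base T \<inter> Base T' = {}"
  unfolding Base_def using DD_disj[OF _ _ SomeJ SomeJ] by blast
lemma Base_Free: "T \<in> Ind \<Longrightarrow> Base T \<inter> Free = {}"
  unfolding Base_def Free_def using DD_disj[OF _ _ SomeJ NoneJ] by blast

lemma Base_measure: "T \<in> Ind \<Longrightarrow> measure lebesgue (Base T) = \<mu> T"
proof -
  assume T: "T \<in> Ind"
  have "measure lebesgue (Base T) = (\<Sum>S\<in>Pow W. measure lebesgue (A S) * \<mu> T / m)"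
    unfolding Base_def using DD_union_measure[OF _ SomeJ[OF T], of "Pow W"] by (simp add: cw_def)
  also have "\<dots> = (\<Sum>S\<in>Pow W. measure lebesgue (A S)) * \<mu> T / m"
    by (simp add: sum_divide_distrib[symmetric] sum_distrib_right)
  finally show ?thesis using sumA mpos by simp
qed

lemma Base_out: "w \<in> W \<Longrightarrow> T \<in> Ind \<Longrightarrow> Base T - p w = (\<Union>S\<in>{S\<in>Pow W. w \<notin> S}. DD S (Some T))"
  and Base_in: "w \<in> W \<Longrightarrow> T \<in> Ind \<Longrightarrow> Base T \<inter> p w = (\<Union>S\<in>{S\<in>Pow W. w \<in> S}. DD S (Some T))"
  and Free_out: "w \<in> W \<Longrightarrow> Free - p w = (\<Union>S\<in>{S\<in>Pow W. w \<notin> S}. DD S None)"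
  and Free_in: "w \<in> W \<Longrightarrow> Free \<inter> p w = (\<Union>S\<in>{S\<in>Pow W. w \<in> S}. DD S None)"
proof -
  assume w: "w \<in> W"
  have i: "j \<in> J \<Longrightarrow> S \<in> Pow W \<Longrightarrow> w \<in> S \<Longrightarrow> DD S j \<subseteq> p w" for S j using DD_sub A_in[OF w] by blast
  have o: "j \<in> J \<Longrightarrow> S \<in> Pow W \<Longrightarrow> w \<notin> S \<Longrightarrow> DD S j \<inter> p w = {}" for S j using DD_sub A_out[OF w] by blast
  { assume T: "T \<in> Ind"
    show "Base T - p w = (\<Union>S\<in>{S\<in>Pow W. w \<notin> S}. DD S (Some T))"
      unfolding Base_def by (rule split_in_out(1)) (use i[OF SomeJ[OF T]] o[OF SomeJ[OF T]] in auto)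
    show "Base T \<inter> p w = (\<Union>S\<in>{S\<in>Pow W. w \<in> S}. DD S (Some T))"
      unfolding Base_def by (rule split_in_out(2)) (use i[OF SomeJ[OF T]] o[OF SomeJ[OF T]] in auto)
  }
  show "Free - p w = (\<Union>S\<in>{S\<in>Pow W. w \<notin> S}. DD S None)"
    unfolding Free_def by (rule split_in_out(1)) (use i[OF NoneJ] o[OF NoneJ] in auto)
  show "Free \<inter> p w = (\<Union>S\<in>{S\<in>Pow W. w \<in> S}. DD S None)"
    unfolding Free_def by (rule split_in_out(2)) (use i[OF NoneJ] o[OF NoneJ] in auto)
qed

lemma meas_Base_out: "w \<in> W \<Longrightarrow> T \<in> Ind \<Longrightarrow> measure lebesgue (Base T - p w) = (m - 1) * \<mu> T / m"
proof -
  assume w: "w \<in> W" and T: "T \<in> Ind"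
  have "measure lebesgue (Base T - p w) = (\<Sum>S\<in>{S\<in>Pow W. w \<notin> S}. measure lebesgue (A S) * \<mu> T / m)"
    unfolding Base_out[OF w T] by (subst DD_union_measure[OF _ SomeJ[OF T]]) (auto simp: cw_def)
  also have "\<dots> = (\<Sum>S\<in>{S\<in>Pow W. w \<notin> S}. measure lebesgue (A S)) * \<mu> T / m"
    by (simp add: sum_divide_distrib[symmetric] sum_distrib_right)
  finally show ?thesis using sumAnw[OF w] by simp
qed

lemma meas_Free_in: "w \<in> W \<Longrightarrow> measure lebesgue (Free \<inter> p w) = \<epsilon> / m"
proof -
  assume w: "w \<in> W"
  have "measure lebesgue (Free \<inter> p w) = (\<Sum>S\<in>{S\<in>Pow W. w \<in> S}. \<epsilon> * measure lebesgue (A S) / m)"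
    unfolding Free_in[OF w] by (subst DD_union_measure[OF _ NoneJ]) (auto simp: cw_def)
  also have "\<dots> = \<epsilon> * (\<Sum>S\<in>{S\<in>Pow W. w \<in> S}. measure lebesgue (A S)) / m"
    by (simp add: sum_divide_distrib[symmetric] sum_distrib_left)
  finally show ?thesis using sumAw[OF w] by simp
qed

lemma meas_Free: "measure lebesgue Free = \<epsilon>"
proof -
  have "measure lebesgue Free = (\<Sum>S\<in>Pow W. \<epsilon> * measure lebesgue (A S) / m)"
    unfolding Free_def by (subst DD_union_measure[OF _ NoneJ]) (auto simp: cw_def)
  also have "\<dots> = \<epsilon> * (\<Sum>S\<in>Pow W. measure lebesgue (A S)) / m"
    by (simp add: sum_divide_distrib[symmetric] sum_distrib_left)
  finally show ?thesis using sumA mpos by simp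
qed

lemma meas_Free_out: "w \<in> W \<Longrightarrow> measure lebesgue (Free - p w) = \<epsilon> - \<epsilon> / m"
proof -
  assume w: "w \<in> W"
  have "Free - p w = Free - (Free \<inter> p w)" by blast
  also have "measure lebesgue \<dots> = measure lebesgue Free - measure lebesgue (Free \<inter> p w)"
    using Free_sets Free_bnd p_props[OF w] by (intro mdiff[where a=0 and b=m]) auto
  finally show ?thesis using meas_Free meas_Free_in[OF w] by simp
qed

definition "Iw w = {T \<in> Ind. w \<in> T}"
definition "Cprop w C \<longleftrightarrow> (\<forall>T\<in>Iw w. C T \<subseteq> Free \<inter> p w \<and> C T \<in> sets lebesgue \<and> measure lebesgue (C T) = \<epsilon> * \<mu> T / m) \<and> disjoint_family_on C (Iw w)"
definition "Cs w = (SOME C. Cprop w C)"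
definition "Eprop w T X \<longleftrightarrow> X \<subseteq> Base T - p w \<and> X \<in> sets lebesgue \<and> measure lebesgue X = \<epsilon> * \<mu> T / m"
definition "Es w T = (SOME X. Eprop w T X)"

lemma finIw: "finite (Iw w)" unfolding Iw_def using finInd by simp

lemma Cs_ex: assumes w: "w \<in> W" shows "Cprop w (Cs w)"
proof -
  have wV: "w \<in> V" using w WV by auto
  have "(\<Sum>T\<in>Iw w. \<epsilon> * \<mu> T / m) = \<epsilon> * (\<Sum>T\<in>Iw w. \<mu> T) / m"
    by (simp add: sum_divide_distrib[symmetric] sum_distrib_left)
  also have "\<dots> = \<epsilon> / m" using sumBv[OF wV] unfolding Iw_def by simp
  finally have sm: "(\<Sum>T\<in>Iw w. \<epsilon> * \<mu> T / m) \<le> measure lebesgue (Free \<inter> p w)" using meas_Free_in[OF w] by simp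
  have "\<exists>C. Cprop w C"
    unfolding Cprop_def
    using split_measure[OF finIw _ _ _ sm] Free_sets p_props[OF w] Free_bnd eps mpos mu_nonneg
    by auto
  then show ?thesis unfolding Cs_def by (rule someI_ex)
qed

lemma Es_ex: assumes w: "w \<in> W" and T: "T \<in> Ind" shows "Eprop w T (Es w T)"
proof -
  have wV: "w \<in> V" using w WV by auto
  have "\<epsilon> * \<mu> T / m \<le> (m - 1) * \<mu> T / m"
    using k_ge1[OF wV] mu_nonneg[of T] mpos by (intro divide_right_mono mult_right_mono) auto
  then have le: "\<epsilon> * \<mu> T / m \<le> measure lebesgue (Base T - p w)" using meas_Base_out[OF w T] by simp
  have "\<exists>X. Eprop w T X"
    unfolding Eprop_def
    using subset_measure[OF _ _ _ le, of 0 m] Base_sets[OF T] Base_bnd[OF T] p_props[OF w] eps mpos mu_nonneg[of T]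
    by auto
  then show ?thesis unfolding Es_def by (rule someI_ex)
qed

lemma Base_sub': "T \<in> Ind \<Longrightarrow> Base T \<subseteq> {0..<m}"
  unfolding Base_def using DD_sub[OF SomeJ] A_sub' by blast
lemma Free_sub': "Free \<subseteq> {0..<m}"
  unfolding Free_def using DD_sub[OF NoneJ] A_sub' by blast

lemma Es_props: assumes "w \<in> W" "T \<in> Ind"
  shows "Es w T \<subseteq> Base T" "Es w T \<inter> p w = {}" "Es w T \<in> sets lebesgue" "measure lebesgue (Es w T) = \<epsilon> * \<mu> T / m"
  using Es_ex[OF assms] unfolding Eprop_def by auto

lemma Cs_props: assumes "w \<in> W" "T \<in> Iw w"
  shows "Cs w T \<subseteq> Free" "Cs w T \<subseteq> p w" "Cs w T \<in> sets lebesgue" "measure lebesgue (Cs w T) = \<epsilon> * \<mu> T / m"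
  using Cs_ex[OF assms(1)] assms(2) unfolding Cprop_def by auto

lemma Cs_disj: assumes "w \<in> W" "T \<in> Iw w" "T' \<in> Iw w" "T \<noteq> T'" shows "Cs w T \<inter> Cs w T' = {}"
  using Cs_ex[OF assms(1)] assms(2-4) unfolding Cprop_def disjoint_family_on_def by auto

definition "Gp w T = (if w \<in> T then Cs w T else {})"
definition "G w T = (if w \<in> T then (Base T - Es w T) \<union> Cs w T else Base T)"

lemma Iw_Ind: "T \<in> Iw x \<Longrightarrow> T \<in> Ind" unfolding Iw_def by auto

lemma Gp_props: assumes "w \<in> W" "T \<in> Ind"
  shows "Gp w T \<subseteq> Free" "Gp w T \<subseteq> p w"
  using Cs_props[OF assms(1)] assms unfolding Gp_def Iw_def by auto

lemma Gp_disj: assumes "w \<in> W" "T \<in> Ind" "T' \<in> Ind" "T \<noteq> T'" shows "Gp w T \<inter> Gp w T' = {}"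
  using Cs_disj[OF assms(1)] assms unfolding Gp_def Iw_def by auto

lemma G_sub: "G w T \<subseteq> Base T \<union> Gp w T" unfolding G_def Gp_def by auto

lemma G_Es: assumes "w \<in> W" "T \<in> Ind" "w \<in> T" shows "G w T \<inter> Es w T = {}"
proof -
  have "T \<in> Iw w" using assms unfolding Iw_def by auto
  then have "Cs w T \<subseteq> Free" using Cs_props(1)[OF assms(1)] by blast
  then show ?thesis using Es_props[OF assms(1,2)] Base_Free[OF assms(2)] assms(3) unfolding G_def by auto
qed

lemma G_sets: assumes "w \<in> W" "T \<in> Ind" shows "G w T \<in> sets lebesgue"
  using Cs_props[OF assms(1)] Es_props[OF assms] Base_sets[OF assms(2)] assms unfolding G_def Iw_def by auto

lemma G_sub': assumes "w \<in> W" "T \<in> Ind" shows "G w T \<subseteq> {0..<m}"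
  using G_sub[of w T] Gp_props[OF assms] Base_sub'[OF assms(2)] Free_sub' by blast

lemma G_meas: assumes "w \<in> W" "T \<in> Ind" shows "measure lebesgue (G w T) = \<mu> T"
proof (cases "w \<in> T")
  case True
  then have TI: "T \<in> Iw w" using assms unfolding Iw_def by auto
  note C = Cs_props[OF assms(1) TI] and Es = Es_props[OF assms]
  have GT: "G w T = (Base T - Es w T) \<union> Cs w T" using True unfolding G_def by simp
  have "measure lebesgue (G w T) = measure lebesgue (Base T - Es w T) + measure lebesgue (Cs w T)"
    unfolding GT using True C Es Base_sets[OF assms(2)] Base_bnd[OF assms(2)] Free_bnd Base_Free[OF assms(2)]
    by (intro mun2[where a=0 and b=m]) auto
  also have "measure lebesgue (Base T - Es w T) = \<mu> T - \<epsilon> * \<mu> T / m"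
    using mdiff[OF Base_sets[OF assms(2)] Base_bnd[OF assms(2)] Es(3,1)] Es(4) Base_measure[OF assms(2)] by simp
  finally show ?thesis using C(4) by simp
next
  case False
  then show ?thesis unfolding G_def using Base_measure[OF assms(2)] by simp
qed

definition "n1 v \<longleftrightarrow> (\<exists>w\<in>W. E w v)"
definition "c1 v = (SOME w. w \<in> W \<and> E w v)"
definition "n2 v \<longleftrightarrow> \<not> n1 v \<and> (\<exists>w\<in>W. \<exists>y. E w y \<and> E y v)"
definition "c2 v = (SOME w. w \<in> W \<and> (\<exists>y. E w y \<and> E y v))"

lemma c1_props: "n1 v \<Longrightarrow> c1 v \<in> W \<and> E (c1 v) v"
  unfolding n1_def c1_def by (rule someI_ex) blast
lemma c2_props: "n2 v \<Longrightarrow> c2 v \<in> W \<and> (\<exists>y. E (c2 v) y \<and> E y v)"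
  unfolding n2_def c2_def by (rule someI_ex) blast

lemma c1_uniq: assumes "n1 v" "w \<in> W" "E w v" shows "c1 v = w"
proof -
  have "E v w" using assms(3) Esym by auto
  then have "walk E (Suc (Suc 0)) (c1 v) w" using c1_props[OF assms(1)] unfolding walk.simps by blast
  from close_eq[OF c1_props[OF assms(1), THEN conjunct1] assms(2) this] show ?thesis by simp
qed

definition "g v = (if v \<in> W then p v
  else if n1 v then (\<Union>T\<in>Iw v. Base T - p (c1 v)) \<union> (\<Union>T\<in>Iw (c1 v). Es (c1 v) T) \<union> (Free - p (c1 v))
  else if n2 v then (\<Union>T\<in>Iw v. G (c2 v) T)
  else (\<Union>T\<in>Iw v. Base T))"

lemma adj_diff: "E x y \<Longrightarrow> T \<in> Iw x \<Longrightarrow> T' \<in> Iw y \<Longrightarrow> T \<noteq> T'"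
  unfolding Iw_def Ind_def by auto

lemma sum_mu_scaled: "v \<in> V \<Longrightarrow> (\<Sum>T\<in>Iw v. c * \<mu> T / m) = c / m"
proof -
  assume v: "v \<in> V"
  have "(\<Sum>T\<in>Iw v. c * \<mu> T / m) = c * (\<Sum>T\<in>Iw v. \<mu> T) / m"
    by (simp add: sum_divide_distrib[symmetric] sum_distrib_left)
  then show ?thesis using sumBv[OF v] unfolding Iw_def by simp
qed

lemma union_Base_meas:
  assumes "v \<in> V" "\<And>T. T \<in> Iw v \<Longrightarrow> X T \<in> sets lebesgue" "\<And>T. T \<in> Iw v \<Longrightarrow> X T \<subseteq> Base T \<union> Y T"
    "\<And>T. T \<in> Iw v \<Longrightarrow> Y T \<subseteq> Free" "\<And>T T'. T \<in> Iw v \<Longrightarrow> T' \<in> Iw v \<Longrightarrow> T \<noteq> T' \<Longrightarrow> Y T \<inter> Y T' = {}"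
    "\<And>T. T \<in> Iw v \<Longrightarrow> measure lebesgue (X T) = c * \<mu> T / m"
  shows "measure lebesgue (\<Union>T\<in>Iw v. X T) = c / m"
proof -
  have "disjoint_family_on X (Iw v)"
    unfolding disjoint_family_on_def
  proof (intro ballI impI)
    fix T T' assume T: "T \<in> Iw v" "T' \<in> Iw v" "T \<noteq> T'"
    then have "Base T \<inter> Base T' = {}" "Base T \<inter> Free = {}" "Base T' \<inter> Free = {}"
      using Base_disj Base_Free Iw_Ind by auto
    then show "X T \<inter> X T' = {}" using assms(3)[OF T(1)] assms(3)[OF T(2)] assms(4)[OF T(1)] assms(4)[OF T(2)] assms(5)[OF T] by blast
  qed
  moreover have "X T \<subseteq> {0..m}" if "T \<in> Iw v" for T
    using assms(3,4)[OF that] Base_bnd[OF Iw_Ind[OF that]] Free_bnd by blast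
  ultimately have "measure lebesgue (\<Union>T\<in>Iw v. X T) = (\<Sum>T\<in>Iw v. measure lebesgue (X T))"
    using finIw assms(2) by (intro msum[where a=0 and b=m]) auto
  also have "\<dots> = (\<Sum>T\<in>Iw v. c * \<mu> T / m)" using assms(6) by simp
  finally show ?thesis using sum_mu_scaled[OF assms(1)] by simp
qed

lemma g_meas_R: assumes "v \<in> V" shows "measure lebesgue (\<Union>T\<in>Iw v. Base T) = 1"
  using union_Base_meas[OF assms, of Base "\<lambda>_. {}" m] Base_sets Base_measure Iw_Ind mpos by auto

lemma g_meas_n2: assumes "v \<in> V" "w \<in> W" shows "measure lebesgue (\<Union>T\<in>Iw v. G w T) = 1"
  using union_Base_meas[OF assms(1), of "G w" "Gp w" m] G_sets[OF assms(2)] G_meas[OF assms(2)] Iw_Ind mpos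
    G_sub Gp_props[OF assms(2)] Gp_disj[OF assms(2)] by auto

lemma g_meas_n1: assumes "v \<in> V" "w \<in> W" "E w v"
  shows "1 \<le> measure lebesgue ((\<Union>T\<in>Iw v. Base T - p w) \<union> (\<Union>T\<in>Iw w. Es w T) \<union> (Free - p w))"
proof -
  have wV: "w \<in> V" using assms WV by auto
  define X1 where "X1 = (\<Union>T\<in>Iw v. Base T - p w)"
  define X2 where "X2 = (\<Union>T\<in>Iw w. Es w T)"
  define X3 where "X3 = Free - p w"
  have m1: "measure lebesgue X1 = (m - 1) / m" unfolding X1_def
    using union_Base_meas[OF assms(1), of "\<lambda>T. Base T - p w" "\<lambda>_. {}" "m - 1"] Base_sets p_props[OF assms(2)]
      meas_Base_out[OF assms(2)] Iw_Ind by auto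
  have m2: "measure lebesgue X2 = \<epsilon> / m" unfolding X2_def
    using union_Base_meas[OF wV, of "Es w" "\<lambda>_. {}" "\<epsilon>"] Es_props[OF assms(2)] Iw_Ind by auto
  have m3: "measure lebesgue X3 = \<epsilon> - \<epsilon> / m" unfolding X3_def using meas_Free_out[OF assms(2)] .
  have s1a: "X1 \<in> sets lebesgue" unfolding X1_def
    using finIw Base_sets Iw_Ind p_props[OF assms(2)] by (auto intro!: sets.finite_UN)
  have s1b: "X1 \<subseteq> {0..m}" unfolding X1_def
  proof (rule UN_least)
    fix T assume "T \<in> Iw v" then show "Base T - p w \<subseteq> {0..m}" using Base_bnd[OF Iw_Ind] by blast
  qed
  note s1 = s1a s1b
  have s2a: "X2 \<in> sets lebesgue" unfolding X2_def
  proof (rule sets.finite_UN[OF finIw])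
    fix T assume "T \<in> Iw w" then show "Es w T \<in> sets lebesgue" using Es_props(3)[OF assms(2) Iw_Ind] by blast
  qed
  have s2b: "X2 \<subseteq> {0..m}" unfolding X2_def
  proof (rule UN_least)
    fix T assume "T \<in> Iw w" then show "Es w T \<subseteq> {0..m}" using Es_props(1)[OF assms(2) Iw_Ind] Base_bnd[OF Iw_Ind] by blast
  qed
  note s2 = s2a s2b
  have s3: "X3 \<in> sets lebesgue" "X3 \<subseteq> {0..m}" unfolding X3_def using Free_sets Free_bnd p_props[OF assms(2)] by auto
  have d12: "X1 \<inter> X2 = {}"
  proof -
    have "(Base T - p w) \<inter> Es w T' = {}" if "T \<in> Iw v" "T' \<in> Iw w" for T T'
    proof -
      have "T \<noteq> T'" using adj_diff[OF Esym[OF assms(3)] that] .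
      then show ?thesis using Base_disj[OF Iw_Ind[OF that(1)] Iw_Ind[OF that(2)]] Es_props(1)[OF assms(2) Iw_Ind[OF that(2)]] by blast
    qed
    then show ?thesis unfolding X1_def X2_def by blast
  qed
  have d3: "(X1 \<union> X2) \<inter> X3 = {}"
  proof -
    have "x \<notin> Free" if "x \<in> X1 \<union> X2" for x
    proof -
      from that obtain T where "T \<in> Ind" "x \<in> Base T" unfolding X1_def X2_def
        using Es_props(1)[OF assms(2)] Iw_Ind by blast
      then show ?thesis using Base_Free by blast
    qed
    then show ?thesis unfolding X3_def by blast
  qed
  have "measure lebesgue (X1 \<union> X2 \<union> X3) = measure lebesgue (X1 \<union> X2) + measure lebesgue X3"
    using s1 s2 s3 d3 by (intro mun2[where a=0 and b=m]) auto
  also have "measure lebesgue (X1 \<union> X2) = measure lebesgue X1 + measure lebesgue X2"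
    using s1 s2 d12 by (intro mun2[where a=0 and b=m]) auto
  finally have "measure lebesgue (X1 \<union> X2 \<union> X3) = (m - 1) / m + \<epsilon>" using m1 m2 m3 by simp
  moreover have "1 \<le> (m - 1) / m + \<epsilon>"
  proof -
    have "(m - 1) / m = 1 - 1 / m" using mpos by (simp add: field_simps)
    moreover have "1 / m \<le> \<epsilon>" using epsm mpos by (simp add: field_simps mult.commute)
    ultimately show ?thesis by simp
  qed
  ultimately show ?thesis unfolding X1_def X2_def X3_def by simp
qed

definition "gn1 v w = (\<Union>T\<in>Iw v. Base T - p w) \<union> (\<Union>T\<in>Iw w. Es w T) \<union> (Free - p w)"

lemma g_W: "v \<in> W \<Longrightarrow> g v = p v" unfolding g_def by simp
lemma g_n1: "v \<notin> W \<Longrightarrow> n1 v \<Longrightarrow> g v = gn1 v (c1 v)" unfolding g_def gn1_def by simp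
lemma g_n2: "v \<notin> W \<Longrightarrow> n2 v \<Longrightarrow> g v = (\<Union>T\<in>Iw v. G (c2 v) T)" unfolding g_def n2_def by simp
lemma g_R: "v \<notin> W \<Longrightarrow> \<not> n1 v \<Longrightarrow> \<not> n2 v \<Longrightarrow> g v = (\<Union>T\<in>Iw v. Base T)" unfolding g_def by simp

lemma gn1_sets: assumes "w \<in> W" shows "gn1 v w \<in> sets lebesgue"
proof -
  have "(\<Union>T\<in>Iw v. Base T - p w) \<in> sets lebesgue"
    using finIw Base_sets Iw_Ind p_props[OF assms] by (auto intro!: sets.finite_UN)
  moreover have "(\<Union>T\<in>Iw w. Es w T) \<in> sets lebesgue"
  proof (rule sets.finite_UN[OF finIw])
    fix T assume "T \<in> Iw w" then show "Es w T \<in> sets lebesgue" using Es_props(3)[OF assms Iw_Ind] by blast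
  qed
  moreover have "Free - p w \<in> sets lebesgue" using Free_sets p_props[OF assms] by auto
  ultimately show ?thesis unfolding gn1_def by auto
qed

lemma gn1_sub: assumes "w \<in> W" shows "gn1 v w \<subseteq> {0..<m}"
proof -
  have "(\<Union>T\<in>Iw v. Base T - p w) \<subseteq> {0..<m}"
  proof (rule UN_least)
    fix T assume "T \<in> Iw v" then show "Base T - p w \<subseteq> {0..<m}" using Base_sub'[OF Iw_Ind] by blast
  qed
  moreover have "(\<Union>T\<in>Iw w. Es w T) \<subseteq> {0..<m}"
  proof (rule UN_least)
    fix T assume "T \<in> Iw w" then show "Es w T \<subseteq> {0..<m}" using Es_props(1)[OF assms Iw_Ind] Base_sub'[OF Iw_Ind] by blast
  qed
  moreover have "Free - p w \<subseteq> {0..<m}" using Free_sub' by blast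
  ultimately show ?thesis unfolding gn1_def by blast
qed

lemma UN_G_sets: assumes "w \<in> W" shows "(\<Union>T\<in>Iw v. G w T) \<in> sets lebesgue"
proof (rule sets.finite_UN[OF finIw])
  fix T assume "T \<in> Iw v" then show "G w T \<in> sets lebesgue" using G_sets[OF assms Iw_Ind] by blast
qed

lemma UN_G_sub: assumes "w \<in> W" shows "(\<Union>T\<in>Iw v. G w T) \<subseteq> {0..<m}"
proof (rule UN_least)
  fix T assume "T \<in> Iw v" then show "G w T \<subseteq> {0..<m}" using G_sub'[OF assms Iw_Ind] by blast
qed

lemma UN_B_sets: "(\<Union>T\<in>Iw v. Base T) \<in> sets lebesgue"
proof (rule sets.finite_UN[OF finIw])
  fix T assume "T \<in> Iw v" then show "Base T \<in> sets lebesgue" using Base_sets[OF Iw_Ind] by blast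
qed

lemma UN_B_sub: "(\<Union>T\<in>Iw v. Base T) \<subseteq> {0..<m}"
proof (rule UN_least)
  fix T assume "T \<in> Iw v" then show "Base T \<subseteq> {0..<m}" using Base_sub'[OF Iw_Ind] by blast
qed

lemma g_props: assumes "v \<in> V" shows "g v \<in> sets lebesgue \<and> g v \<subseteq> {0..<m}"
proof -
  consider "v \<in> W" | "v \<notin> W" "n1 v" | "v \<notin> W" "n2 v" | "v \<notin> W" "\<not> n1 v" "\<not> n2 v" by blast
  then show ?thesis
  proof cases
    case 1 then show ?thesis using g_W p_props by auto
  next
    case 2 then show ?thesis using g_n1 gn1_sets gn1_sub c1_props by auto
  next
    case 3 then show ?thesis using g_n2 UN_G_sets UN_G_sub c2_props by auto
  next
    case 4 then show ?thesis using g_R UN_B_sets UN_B_sub by auto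
  qed
qed

lemma g_meas: assumes "v \<in> V" "v \<notin> W" shows "1 \<le> measure lebesgue (g v)"
proof -
  consider "n1 v" | "n2 v" | "\<not> n1 v" "\<not> n2 v" by blast
  then show ?thesis
  proof cases
    case 1 then show ?thesis using g_n1[OF assms(2)] g_meas_n1[OF assms(1)] c1_props unfolding gn1_def by auto
  next
    case 2 then show ?thesis using g_n2[OF assms(2)] g_meas_n2[OF assms(1)] c2_props by auto
  next
    case 3 then show ?thesis using g_R[OF assms(2)] g_meas_R[OF assms(1)] by auto
  qed
qed

lemma disj_W_n1: assumes "w \<in> W" "t \<in> gn1 v w" shows "t \<notin> p w"
  using assms(2) Es_props(2)[OF assms(1) Iw_Ind] unfolding gn1_def by blast

lemma G_cases: assumes "w \<in> W" "T \<in> Ind" "t \<in> G w T" shows "t \<in> Base T \<or> (t \<in> Free \<and> t \<in> p w)"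
  using assms(3) G_sub[of w T] Gp_props[OF assms(1,2)] by blast

lemma disj_n1_n2: assumes w: "w \<in> W" and e: "E x y" and t: "t \<in> gn1 x w" and T': "T' \<in> Iw y" "t \<in> G w T'"
  and wx: "E w x"
  shows False
proof -
  have I': "T' \<in> Ind" using T'(1) Iw_Ind by blast
  consider (a) T where "T \<in> Iw x" "t \<in> Base T" "t \<notin> p w" | (b) T where "T \<in> Iw w" "t \<in> Es w T" | (c) "t \<in> Free" "t \<notin> p w"
    using t unfolding gn1_def by blast
  then show False
  proof cases
    case a
    have "T \<noteq> T'" using adj_diff[OF e a(1) T'(1)] .
    then show False using G_cases[OF w I' T'(2)] a Base_disj[OF Iw_Ind[OF a(1)] I'] Base_Free[OF Iw_Ind[OF a(1)]] by blast
  next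
    case b
    have I: "T \<in> Ind" using b(1) Iw_Ind by blast
    have E1: "t \<in> Base T" using Es_props(1)[OF w I] b(2) by blast
    show False
    proof (cases "T = T'")
      case True
      have "w \<in> T" using b(1) unfolding Iw_def by auto
      then show False using G_Es[OF w I] True b(2) T'(2) by blast
    next
      case False
      then show False using G_cases[OF w I' T'(2)] E1 Base_disj[OF I I'] Base_Free[OF I] by blast
    qed
  next
    case c
    then show False using G_cases[OF w I' T'(2)] Base_Free[OF I'] by blast
  qed
qed

lemma disj_n2_n2: assumes w: "w \<in> W" and e: "E x y" and T: "T \<in> Iw x" "T' \<in> Iw y" and t: "t \<in> G w T" "t \<in> G w T'"
  shows False
proof -
  have I: "T \<in> Ind" "T' \<in> Ind" using T Iw_Ind by blast+
  have ne: "T \<noteq> T'" using adj_diff[OF e T] .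
  have "t \<in> Base T \<union> Gp w T" "t \<in> Base T' \<union> Gp w T'" using t G_sub by blast+
  then show False using Base_disj[OF I ne] Base_Free[OF I(1)] Base_Free[OF I(2)] Gp_props(1)[OF w I(1)] Gp_props(1)[OF w I(2)]
    Gp_disj[OF w I ne] by blast
qed

lemma disj_n2_R: assumes w: "w \<in> W" and e: "E x y" and T: "T \<in> Iw x" "T' \<in> Iw y" and t: "t \<in> G w T" "t \<in> Base T'"
  shows False
proof -
  have I: "T \<in> Ind" "T' \<in> Ind" using T Iw_Ind by blast+
  have ne: "T \<noteq> T'" using adj_diff[OF e T] .
  show False using G_cases[OF w I(1) t(1)] t(2) Base_disj[OF I ne] Base_Free[OF I(2)] by blast
qed

lemma disj_R_R: assumes e: "E x y" and T: "T \<in> Iw x" "T' \<in> Iw y" and t: "t \<in> Base T" "t \<in> Base T'"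
  shows False
  using Base_disj[OF Iw_Ind[OF T(1)] Iw_Ind[OF T(2)] adj_diff[OF e T]] t by blast

definition "rk v = (if v \<in> W then 0 else if n1 v then 1 else if n2 v then 2 else (3::nat))"

lemma walk2: "E a b \<Longrightarrow> E b c \<Longrightarrow> walk E (Suc (Suc 0)) a c" unfolding walk.simps by blast
lemma walk3: "E a b \<Longrightarrow> E b c \<Longrightarrow> E c d \<Longrightarrow> walk E (Suc (Suc (Suc 0))) a d" unfolding walk.simps by blast
lemma walk4: "E a b \<Longrightarrow> E b c \<Longrightarrow> E c d \<Longrightarrow> E d e1 \<Longrightarrow> walk E (Suc (Suc (Suc (Suc 0)))) a e1"
  unfolding walk.simps by blast
lemma walk5: "E a b \<Longrightarrow> E b c \<Longrightarrow> E c d \<Longrightarrow> E d e1 \<Longrightarrow> E e1 f1 \<Longrightarrow> walk E (Suc (Suc (Suc (Suc (Suc 0))))) a f1"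
  unfolding walk.simps by blast

lemma g_disj_ord: assumes e: "E x y" and r: "rk x \<le> rk y" shows "g x \<inter> g y = {}"
proof -
  have xV: "x \<in> V" and yV: "y \<in> V" using EV[OF e] by auto
  consider "x \<in> W" | "x \<notin> W" "n1 x" | "x \<notin> W" "n2 x" | "x \<notin> W" "\<not> n1 x" "\<not> n2 x" by blast
  then show ?thesis
  proof cases
    case 1
    then have n1y: "n1 y" unfolding n1_def using e by blast
    show ?thesis
    proof (cases "y \<in> W")
      case True
      have "walk E (Suc 0) x y" using e by simp
      from close_eq[OF 1 True this] have "x = y" by simp
      then show ?thesis using e Eirr by simp
    next
      case False
      have "c1 y = x" using c1_uniq[OF n1y 1 e] .
      then show ?thesis using g_n1[OF False n1y] g_W[OF 1] disj_W_n1[OF 1] by auto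
    qed
  next
    case 2
    define a where "a = c1 x"
    have a: "a \<in> W" "E a x" using c1_props[OF 2(2)] unfolding a_def by auto
    have yW: "y \<notin> W" using r 2 unfolding rk_def by (auto split: if_splits)
    consider "n1 y" | "n2 y" | "\<not> n1 y" "\<not> n2 y" by blast
    then show ?thesis
    proof cases
      case 1
      define b where "b = c1 y"
      have b: "b \<in> W" "E b y" using c1_props[OF 1] unfolding b_def by auto
      have "a = b" using close_eq[OF a(1) b(1) walk3[OF a(2) e Esym[OF b(2)]]] by simp
      then show ?thesis using no_triangle[OF a(2) e] b(2) by blast
    next
      case 2
      define b where "b = c2 y"
      obtain z where b: "b \<in> W" "E b z" "E z y" using c2_props[OF 2] unfolding b_def by auto
      have ab: "a = b" using close_eq[OF a(1) b(1) walk4[OF a(2) e Esym[OF b(3)] Esym[OF b(2)]]] by simp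
      show ?thesis
      proof (rule ccontr)
        assume "g x \<inter> g y \<noteq> {}"
        then obtain t where t: "t \<in> gn1 x a" "t \<in> (\<Union>T\<in>Iw y. G a T)"
          using g_n1[OF \<open>x \<notin> W\<close> \<open>n1 x\<close>] g_n2[OF yW 2] ab unfolding a_def b_def by auto
        then obtain T' where "T' \<in> Iw y" "t \<in> G a T'" by blast
        then show False using disj_n1_n2[OF a(1) e t(1)] a(2) by blast
      qed
    next
      case 3
      have "n2 y" unfolding n2_def using 3(1) a e yW by blast
      then show ?thesis using 3 by blast
    qed
  next
    case 3
    define a where "a = c2 x"
    obtain z where a: "a \<in> W" "E a z" "E z x" using c2_props[OF 3(2)] unfolding a_def by auto
    have yW: "y \<notin> W" and yn1: "\<not> n1 y" using r 3 unfolding rk_def n2_def by (auto split: if_splits)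
    consider "n2 y" | "\<not> n2 y" by blast
    then show ?thesis
    proof cases
      case 1
      define b where "b = c2 y"
      obtain z' where b: "b \<in> W" "E b z'" "E z' y" using c2_props[OF 1] unfolding b_def by auto
      have ab: "a = b" using close_eq[OF a(1) b(1) walk5[OF a(2) a(3) e Esym[OF b(3)] Esym[OF b(2)]]] by simp
      show ?thesis
      proof (rule ccontr)
        assume "g x \<inter> g y \<noteq> {}"
        then obtain t T T' where "T \<in> Iw x" "T' \<in> Iw y" "t \<in> G a T" "t \<in> G a T'"
          using g_n2[OF \<open>x \<notin> W\<close> \<open>n2 x\<close>] g_n2[OF yW 1] ab unfolding a_def b_def by auto
        then show False using disj_n2_n2[OF a(1) e] by blast
      qed
    next
      case 2
      show ?thesis
      proof (rule ccontr)
        assume "g x \<inter> g y \<noteq> {}"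
        then obtain t T T' where "T \<in> Iw x" "T' \<in> Iw y" "t \<in> G a T" "t \<in> Base T'"
          using g_n2[OF \<open>x \<notin> W\<close> \<open>n2 x\<close>] g_R[OF yW yn1 2] unfolding a_def by auto
        then show False using disj_n2_R[OF a(1) e] by blast
      qed
    qed
  next
    case 4
    have yW: "y \<notin> W" and yn: "\<not> n1 y" "\<not> n2 y" using r 4 unfolding rk_def by (auto split: if_splits)
    show ?thesis
    proof (rule ccontr)
      assume "g x \<inter> g y \<noteq> {}"
      then obtain t T T' where "T \<in> Iw x" "T' \<in> Iw y" "t \<in> Base T" "t \<in> Base T'"
        using g_R[OF 4] g_R[OF yW yn] by auto
      then show False using disj_R_R[OF e] by blast
    qed
  qed
qed

lemma g_disj: assumes e: "E x y" shows "g x \<inter> g y = {}"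
proof (cases "rk x \<le> rk y")
  case True then show ?thesis using g_disj_ord[OF e] by blast
next
  case False then show ?thesis using g_disj_ord[OF Esym[OF e]] by auto
qed

definition "g' v = (if v \<in> W then p v else (SOME X. X \<subseteq> g v \<and> X \<in> sets lebesgue \<and> measure lebesgue X = 1))"

lemma g'_props: assumes "v \<in> V"
  shows "g' v \<subseteq> g v \<and> g' v \<in> sets lebesgue \<and> g' v \<subseteq> {0..<m} \<and> measure lebesgue (g' v) = 1"
proof (cases "v \<in> W")
  case True
  then show ?thesis unfolding g'_def using g_W p_props by auto
next
  case False
  have gp: "g v \<in> sets lebesgue" "g v \<subseteq> {0..m}" using g_props[OF assms] by auto
  have "\<exists>X. X \<subseteq> g v \<and> X \<in> sets lebesgue \<and> measure lebesgue X = 1"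
    using subset_measure[OF gp _ g_meas[OF assms False]] by auto
  then have "(SOME X. X \<subseteq> g v \<and> X \<in> sets lebesgue \<and> measure lebesgue X = 1) \<subseteq> g v \<and>
    (SOME X. X \<subseteq> g v \<and> X \<in> sets lebesgue \<and> measure lebesgue X = 1) \<in> sets lebesgue \<and>
    measure lebesgue (SOME X. X \<subseteq> g v \<and> X \<in> sets lebesgue \<and> measure lebesgue X = 1) = 1"
    by (rule someI_ex)
  then have "g' v \<subseteq> g v \<and> g' v \<in> sets lebesgue \<and> measure lebesgue (g' v) = 1"
    unfolding g'_def using False by simp
  then show ?thesis using g_props[OF assms] by auto
qed

lemma extends: "precoloring_extends V E m W p"
  unfolding precoloring_extends_def
proof (intro exI conjI)
  show "fractional_coloring V E m g'"
    unfolding fractional_coloring_def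
  proof (intro conjI ballI allI impI)
    fix v assume v: "v \<in> V"
    note P = g'_props[OF v]
    have "g' v \<in> lmeasurable" using P by (intro bnd_lmeasurable[of _ 0 m]) auto
    then have "emeasure lebesgue (g' v) = 1" using P by (simp add: emeasure_eq_measure2)
    then show "frac_color_set m (g' v)" unfolding frac_color_set_def using P by auto
  next
    fix x y assume e: "E x y"
    then show "g' x \<inter> g' y = {}" using g_disj[OF e] g'_props EV[OF e] by blast
  qed
  show "\<forall>w\<in>W. g' w = p w" unfolding g'_def by simp
qed

end

theorem mainTheorem12:
  fixes V :: "'a set" and E :: "'a \<Rightarrow> 'a \<Rightarrow> bool" and W :: "'a set"
    and k \<epsilon> :: real and p :: "'a \<Rightarrow> real set"
  assumes "k \<in> \<rat>" and "0 < k" and "k < 3"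
    and "0 < \<epsilon>" and "\<epsilon> \<ge> 1 / (k + \<epsilon>)"
    and "graph V E"
    and "fractionally_colorable V E k"
    and "W \<subseteq> V"
    and "\<forall>u\<in>W. \<forall>v\<in>W. u \<noteq> v \<longrightarrow> dist_ge E 6 u v"
    and "fractional_precoloring W (k + \<epsilon>) p"
  shows "precoloring_extends V E (k + \<epsilon>) W p"
proof -
  obtain f where f: "fractional_coloring V E k f" using assms(7) unfolding fractionally_colorable_def by blast
  have "1 \<le> \<epsilon> * (k + \<epsilon>)" using assms(2,4,5) by (simp add: field_simps)
  then interpret ext_setup V E W k \<epsilon> p f
    using assms f by unfold_locales auto
  show ?thesis using extends .
qed

end
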